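(* Let $(X,T)$ be a topological dynamical system (a compact Hausdorff space $X$ with a continuous map $T:X\to X$) and use the uniform system of coefficients $c_S^n=2^{-n}$. Then $$\sup_{\mathscr U}\operatorname{Asc}(X,\mathscr U,T)=h_{\mathrm{top}}(X,T)\quad\text{and}\quad \sup_{\mathscr U}\operatorname{Int}(X,\mathscr U,T)=h_{\mathrm{top}}(X,T),$$ where the suprema are over all open covers $\mathscr U$ of $X$.
   Context: Notation: $n^*=\{0,1,\dots,n-1\}$; for $S\subset n^*$, $S^c=n^*\setminus S$. For an open cover $\mathscr U$ of $X$, $N(\mathscr U)$ is the minimum cardinality of a subcover, and $\mathscr U_S=\bigvee_{i\in S}T^{-i}\mathscr U$ (with $\mathscr U_\emptyset=\{X\}$). The topological average sample complexity is $\operatorname{Asc}(X,\mathscr U,T)=\lim_{n\to\infty}\frac1n\sum_{S\subset n^*}c_S^n\log N(\mathscr U_S)$ and the topological intricacy is $\operatorname{Int}(X,\mathscr U,T)=\lim_{n\to\infty}\frac1n\sum_{S\subset n^*}c_S^n\log\frac{N(\mathscr U_S)N(\mathscr U_{S^c})}{N(\mathscr U_{n^*})}$ (these limits exist). $h_{\mathrm{top}}(X,\mathscr U,T)=\lim_n\frac1n\log N(\mathscr U_{n^*})$ and $h_{\mathrm{top}}(X,T)=\sup_{\mathscr U}h_{\mathrm{top}}(X,\mathscr U,T)$ is the usual topological entropy. *)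

theory Defs
  imports "HOL-Analysis.Analysis"
begin

text \<open>Open covers of the whole (compact) space, which is the type universe.\<close>
definition open_cover :: "'a::topological_space set set \<Rightarrow> bool" where
  "open_cover U \<longleftrightarrow> (\<forall>A\<in>U. open A) \<and> \<Union>U = UNIV"

definition Ncov :: "'a set set \<Rightarrow> nat" where
  "Ncov U = (LEAST k. \<exists>V. V \<subseteq> U \<and> finite V \<and> \<Union>V = UNIV \<and> card V = k)"

text \<open>U_S = join over i in S of T^{-i} U; for S empty this is {UNIV}.\<close>
definition join_cover :: "('a \<Rightarrow> 'a) \<Rightarrow> 'a set set \<Rightarrow> nat set \<Rightarrow> 'a set set" where
  "join_cover T U S = {\<Inter>i\<in>S. (T ^^ i) -` (f i) | f. \<forall>i\<in>S. f i \<in> U}"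

definition Asc :: "('a \<Rightarrow> 'a) \<Rightarrow> 'a set set \<Rightarrow> real" where
  "Asc T U = lim (\<lambda>n. (1 / real n) *
     (\<Sum>S\<in>Pow {..<n}. (1/2)^n * ln (real (Ncov (join_cover T U S)))))"

definition Intr :: "('a \<Rightarrow> 'a) \<Rightarrow> 'a set set \<Rightarrow> real" where
  "Intr T U = lim (\<lambda>n. (1 / real n) *
     (\<Sum>S\<in>Pow {..<n}. (1/2)^n *
        ln (real (Ncov (join_cover T U S)) * real (Ncov (join_cover T U ({..<n} - S)))
            / real (Ncov (join_cover T U {..<n})))))"

definition htop_cover :: "('a \<Rightarrow> 'a) \<Rightarrow> 'a set set \<Rightarrow> real" where
  "htop_cover T U = lim (\<lambda>n. ln (real (Ncov (join_cover T U {..<n}))) / real n)"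

text \<open>Topological entropy, valued in the extended reals (it may be infinite).\<close>
definition htop :: "('a::topological_space \<Rightarrow> 'a) \<Rightarrow> ereal" where
  "htop T = (SUP U\<in>{U. open_cover U}. ereal (htop_cover T U))"

end

theory Submission
  imports Defs
begin



lemma subadd_mult:
  fixes u :: "nat \<Rightarrow> real"
  assumes sub: "\<And>m n. u (m + n) \<le> u m + u n"
  shows "u (q * k + r) \<le> real q * u k + u r"
proof (induction q)
  case 0 then show ?case by simp
next
  case (Suc q)
  have "u (Suc q * k + r) = u (k + (q * k + r))" by (simp add: algebra_simps)
  also have "\<dots> \<le> u k + u (q * k + r)" by (rule sub)
  also have "\<dots> \<le> u k + (real q * u k + u r)" using Suc by simp
  finally show ?case by (simp add: algebra_simps)
qed

lemma fekete:
  fixes u :: "nat \<Rightarrow> real"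
  assumes nn: "\<And>n. u n \<ge> 0" and sub: "\<And>m n. u (m + n) \<le> u m + u n"
  shows "convergent (\<lambda>n. u n / real n)"
proof -
  define L where "L = Inf ((\<lambda>n. u n / real n) ` {1..})"
  have bdd: "bdd_below ((\<lambda>n. u n / real n) ` {1..})"
    by (rule bdd_belowI[where m=0]) (auto intro!: divide_nonneg_nonneg nn)
  have Lle: "L \<le> u n / real n" if "n \<ge> 1" for n
    unfolding L_def using bdd that by (auto intro!: cInf_lower)
  have "(\<lambda>n. u n / real n) \<longlonglongrightarrow> L"
  proof (rule LIMSEQ_I)
    fix r :: real assume r: "r > 0"
    have "L < L + r/2" using r by simp
    then obtain k where k: "k \<ge> 1" "u k / real k < L + r/2"
    proof -
      have "\<exists>x\<in>{1..}. u x / real x < L + r/2"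
        using cInf_less_iff[OF _ bdd, of "L + r/2"] \<open>L < L + r/2\<close> unfolding L_def by auto
      then show ?thesis using that by auto
    qed
    define M where "M = (\<Sum>j<k. u j)"
    have M0: "M \<ge> 0" unfolding M_def by (auto intro!: sum_nonneg nn)
    have uM: "u j \<le> M" if "j < k" for j
      unfolding M_def using that by (intro member_le_sum) (auto intro: nn)
    obtain N where N: "real N > 2 * M / r" using reals_Archimedean2 by blast
    show "\<exists>no. \<forall>n\<ge>no. norm (u n / real n - L) < r"
    proof (intro exI[of _ "Suc N"] allI impI)
      fix n assume n: "n \<ge> Suc N"
      have npos: "real n > 0" using n by simp
      have "u n = u ((n div k) * k + n mod k)" by simp
      also have "\<dots> \<le> real (n div k) * u k + u (n mod k)" by (rule subadd_mult[OF sub])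
      also have "\<dots> \<le> real (n div k) * u k + M" using uM[of "n mod k"] k by simp
      finally have un: "u n \<le> real (n div k) * u k + M" .
      have "real (n div k) * real k \<le> real n"
        by (metis of_nat_le_iff of_nat_mult div_times_less_eq_dividend)
      hence "real (n div k) * real k * (u k / real k) \<le> real n * (u k / real k)"
        using k nn[of k] by (intro mult_right_mono) auto
      hence "real (n div k) * u k \<le> real n * (u k / real k)"
        using k by simp
      hence "u n / real n \<le> u k / real k + M / real n"
        using un npos by (simp add: field_simps)
      moreover have "M / real n < r/2"
      proof -
        have "r * real N \<le> r * real n" using n r by (intro mult_left_mono) auto
        moreover have "M * 2 < r * real N" using N r by (simp add: field_simps)
        ultimately have "M * 2 < r * real n" by linarith
        thus ?thesis using npos by (simp add: field_simps)
      qed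
      moreover have "L \<le> u n / real n" using Lle n by simp
      ultimately have "u n / real n - L < r" "0 \<le> u n / real n - L" using k by linarith+
      thus "norm (u n / real n - L) < r" by simp
    qed
  qed
  thus ?thesis by (auto simp: convergent_def)
qed




lemma Ncov_coarsen:
  assumes "finite W" "\<Union>W = UNIV" "\<And>A. A \<in> W \<Longrightarrow> \<exists>B\<in>Z. A \<subseteq> B"
  shows "Ncov Z \<le> card W"
proof -
  obtain g where g: "\<And>A. A \<in> W \<Longrightarrow> g A \<in> Z \<and> A \<subseteq> g A"
    using assms(3) by metis
  have "g ` W \<subseteq> Z" using g by auto
  moreover have "finite (g ` W)" using assms(1) by simp
  moreover have "\<Union>(g ` W) = UNIV" using g assms(2) by blast
  ultimately have "Ncov Z \<le> card (g ` W)"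
    unfolding Ncov_def by (intro Least_le) blast
  also have "\<dots> \<le> card W" using assms(1) by (rule card_image_le)
  finally show ?thesis .
qed

lemma Ncov_attained:
  assumes "\<exists>V\<subseteq>Z. finite V \<and> \<Union>V = UNIV"
  shows "\<exists>V\<subseteq>Z. finite V \<and> \<Union>V = UNIV \<and> card V = Ncov Z"
proof -
  from assms obtain V where "V\<subseteq>Z" "finite V" "\<Union>V = UNIV" by blast
  hence "\<exists>k V. V \<subseteq> Z \<and> finite V \<and> \<Union>V = UNIV \<and> card V = k" by blast
  from LeastI_ex[OF this] show ?thesis unfolding Ncov_def by blast
qed

lemma Ncov_pos:
  assumes "\<exists>V\<subseteq>Z. finite V \<and> \<Union>V = UNIV"
  shows "Ncov Z \<ge> 1"
proof -
  from Ncov_attained[OF assms] obtain V where V: "V\<subseteq>Z" "finite V" "\<Union>V = UNIV" "card V = Ncov Z"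
    by blast
  have "V \<noteq> {}" using V(3) by auto
  hence "card V \<noteq> 0" using V(2) by simp
  thus ?thesis using V(4) by simp
qed

locale cov =
  fixes T :: "'a::topological_space \<Rightarrow> 'a" and U :: "'a set set"
  assumes cpt: "compact (UNIV :: 'a set)" and oc: "open_cover U"
begin

definition N :: "nat set \<Rightarrow> nat" where "N S = Ncov (join_cover T U S)"
definition a :: "nat set \<Rightarrow> real" where "a S = ln (real (N S))"

lemma fin_sub:
  assumes "finite S"
  shows "\<exists>V\<subseteq>join_cover T U S. finite V \<and> \<Union>V = UNIV"
proof -
  obtain V0 where V0: "V0 \<subseteq> U" "finite V0" "UNIV \<subseteq> \<Union>V0"
    using compactE[OF cpt, of U] oc unfolding open_cover_def by auto
  define W where "W = (\<lambda>f. \<Inter>i\<in>S. (T ^^ i) -` f i) ` PiE S (\<lambda>_. V0)"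
  have "W \<subseteq> join_cover T U S"
    unfolding W_def join_cover_def using V0(1) by (auto simp: PiE_def Pi_def)
  moreover have "finite W" unfolding W_def using assms V0(2) by (intro finite_imageI finite_PiE) auto
  moreover have "\<Union>W = UNIV"
  proof -
    { fix x
      define f where "f = restrict (\<lambda>i. SOME B. B \<in> V0 \<and> (T ^^ i) x \<in> B) S"
      have "\<forall>i\<in>S. f i \<in> V0 \<and> (T ^^ i) x \<in> f i"
      proof
        fix i assume "i \<in> S"
        have "\<exists>B. B \<in> V0 \<and> (T ^^ i) x \<in> B" using V0(3) by blast
        from someI_ex[OF this] show "f i \<in> V0 \<and> (T ^^ i) x \<in> f i"
          unfolding f_def using \<open>i \<in> S\<close> by simp
      qed
      moreover have "f \<in> PiE S (\<lambda>_. V0)" using calculation unfolding f_def by auto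
      ultimately have "x \<in> \<Union>W" unfolding W_def by blast }
    thus ?thesis by blast
  qed
  ultimately show ?thesis by blast
qed

lemma N_pos: "finite S \<Longrightarrow> N S \<ge> 1"
  unfolding N_def by (rule Ncov_pos[OF fin_sub])

lemma a_nonneg: "finite S \<Longrightarrow> a S \<ge> 0"
  unfolding a_def using N_pos by simp

lemma N_attained: "finite S \<Longrightarrow>
   \<exists>V\<subseteq>join_cover T U S. finite V \<and> \<Union>V = UNIV \<and> card V = N S"
  unfolding N_def by (rule Ncov_attained[OF fin_sub])

lemma N_mono:
  assumes "finite S'" "S \<subseteq> S'"
  shows "N S \<le> N S'"
proof -
  obtain V where V: "V\<subseteq>join_cover T U S'" "finite V" "\<Union>V = UNIV" "card V = N S'"
    using N_attained[OF assms(1)] by blast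
  have "Ncov (join_cover T U S) \<le> card V"
  proof (rule Ncov_coarsen[OF V(2,3)])
    fix A assume "A \<in> V"
    then obtain f where f: "A = (\<Inter>i\<in>S'. (T ^^ i) -` f i)" "\<forall>i\<in>S'. f i \<in> U"
      using V(1) unfolding join_cover_def by blast
    have "(\<Inter>i\<in>S. (T ^^ i) -` f i) \<in> join_cover T U S"
      unfolding join_cover_def using f(2) assms(2) by blast
    moreover have "A \<subseteq> (\<Inter>i\<in>S. (T ^^ i) -` f i)" using f(1) assms(2) by blast
    ultimately show "\<exists>B\<in>join_cover T U S. A \<subseteq> B" by blast
  qed
  thus ?thesis using V(4) unfolding N_def by simp
qed

lemma a_mono: "finite S' \<Longrightarrow> S \<subseteq> S' \<Longrightarrow> a S \<le> a S'"
  unfolding a_def using N_mono[of S' S] N_pos[of S] finite_subset[of S S']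
  by (subst ln_le_cancel_iff) auto

lemma N_union:
  assumes "finite S" "finite S'"
  shows "N (S \<union> S') \<le> N S * N S'"
proof -
  obtain V where V: "V\<subseteq>join_cover T U S" "finite V" "\<Union>V = UNIV" "card V = N S"
    using N_attained[OF assms(1)] by blast
  obtain V' where V': "V'\<subseteq>join_cover T U S'" "finite V'" "\<Union>V' = UNIV" "card V' = N S'"
    using N_attained[OF assms(2)] by blast
  define W where "W = (\<lambda>(A,B). A \<inter> B) ` (V \<times> V')"
  have "Ncov (join_cover T U (S \<union> S')) \<le> card W"
  proof (rule Ncov_coarsen)
    show "finite W" unfolding W_def using V(2) V'(2) by simp
    show "\<Union>W = UNIV"
    proof -
      { fix x
        have "x \<in> \<Union>V" "x \<in> \<Union>V'" using V(3) V'(3) by simp_all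
        then obtain A B where "A \<in> V" "x \<in> A" "B \<in> V'" "x \<in> B" by blast
        moreover have "A \<inter> B \<in> W" unfolding W_def
          using \<open>A \<in> V\<close> \<open>B \<in> V'\<close> by (intro image_eqI[of _ _ "(A,B)"]) auto
        ultimately have "x \<in> \<Union>W" by blast }
      thus ?thesis by auto
    qed
    fix C assume "C \<in> W"
    then obtain A B where AB: "A \<in> V" "B \<in> V'" "C = A \<inter> B" unfolding W_def by auto
    obtain f where f: "A = (\<Inter>i\<in>S. (T ^^ i) -` f i)" "\<forall>i\<in>S. f i \<in> U"
      using V(1) AB(1) unfolding join_cover_def by blast
    obtain g where g: "B = (\<Inter>i\<in>S'. (T ^^ i) -` g i)" "\<forall>i\<in>S'. g i \<in> U"
      using V'(1) AB(2) unfolding join_cover_def by blast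
    define h where "h i = (if i \<in> S then f i else g i)" for i
    have "(\<Inter>i\<in>S \<union> S'. (T ^^ i) -` h i) \<in> join_cover T U (S \<union> S')"
      unfolding join_cover_def
      by (rule CollectI, rule exI[of _ h]) (use f(2) g(2) in \<open>auto simp add: h_def\<close>)
    moreover have "C \<subseteq> (\<Inter>i\<in>S \<union> S'. (T ^^ i) -` h i)"
    proof
      fix x assume "x \<in> C"
      hence xA: "\<forall>i\<in>S. (T ^^ i) x \<in> f i" and xB: "\<forall>i\<in>S'. (T ^^ i) x \<in> g i"
        using AB(3) f(1) g(1) by blast+
      show "x \<in> (\<Inter>i\<in>S \<union> S'. (T ^^ i) -` h i)"
      proof (rule InterI, clarify)
        fix i assume "i \<in> S \<union> S'"
        thus "x \<in> (T ^^ i) -` h i" using xA xB by (cases "i \<in> S") (auto simp: h_def)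
      qed
    qed
    ultimately show "\<exists>B\<in>join_cover T U (S \<union> S'). C \<subseteq> B" by blast
  qed
  also have "card W \<le> card (V \<times> V')" unfolding W_def by (rule card_image_le) (use V(2) V'(2) in simp)
  also have "\<dots> = N S * N S'" using V(4) V'(4) by (simp add: card_cartesian_product)
  finally show ?thesis unfolding N_def .
qed

lemma a_union: "finite S \<Longrightarrow> finite S' \<Longrightarrow> a (S \<union> S') \<le> a S + a S'"
proof -
  assume f: "finite S" "finite S'"
  have "real (N (S \<union> S')) \<le> real (N S) * real (N S')"
    using N_union[OF f] by (metis of_nat_le_iff of_nat_mult)
  hence "ln (real (N (S \<union> S'))) \<le> ln (real (N S) * real (N S'))"
    using N_pos[of "S \<union> S'"] f by (subst ln_le_cancel_iff) auto
  also have "\<dots> = a S + a S'" unfolding a_def using N_pos[OF f(1)] N_pos[OF f(2)] by (subst ln_mult) auto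
  finally show ?thesis unfolding a_def .
qed

lemma N_shift:
  assumes "finite S"
  shows "N ((+) k ` S) \<le> N S"
proof -
  obtain V where V: "V\<subseteq>join_cover T U S" "finite V" "\<Union>V = UNIV" "card V = N S"
    using N_attained[OF assms(1)] by blast
  define W where "W = (\<lambda>A. (T ^^ k) -` A) ` V"
  have "Ncov (join_cover T U ((+) k ` S)) \<le> card W"
  proof (rule Ncov_coarsen)
    show "finite W" unfolding W_def using V(2) by simp
    show "\<Union>W = UNIV"
    proof -
      { fix x
        have "(T ^^ k) x \<in> \<Union>V" using V(3) by simp
        then obtain A where "A \<in> V" "(T ^^ k) x \<in> A" by blast
        hence "x \<in> \<Union>W" unfolding W_def by blast }
      thus ?thesis by auto
    qed
    fix C assume "C \<in> W"
    then obtain A where A: "A \<in> V" "C = (T ^^ k) -` A" unfolding W_def by blast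
    obtain f where f: "A = (\<Inter>i\<in>S. (T ^^ i) -` f i)" "\<forall>i\<in>S. f i \<in> U"
      using V(1) A(1) unfolding join_cover_def by blast
    define g where "g l = f (l - k)" for l
    have "(\<Inter>l\<in>(+) k ` S. (T ^^ l) -` g l) \<in> join_cover T U ((+) k ` S)"
      unfolding join_cover_def
      by (rule CollectI, rule exI[of _ g]) (use f(2) in \<open>auto simp add: g_def\<close>)
    moreover have "C \<subseteq> (\<Inter>l\<in>(+) k ` S. (T ^^ l) -` g l)"
    proof
      fix x assume "x \<in> C"
      hence "\<forall>i\<in>S. (T ^^ i) ((T ^^ k) x) \<in> f i" using A(2) f(1) by auto
      show "x \<in> (\<Inter>l\<in>(+) k ` S. (T ^^ l) -` g l)"
      proof (rule InterI, clarify)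
        fix i assume i: "i \<in> S"
        have "(T ^^ (k + i)) x = (T ^^ i) ((T ^^ k) x)"
          by (simp add: funpow_add add.commute[of k])
        thus "x \<in> (T ^^ (k + i)) -` g (k + i)" using i \<open>\<forall>i\<in>S. (T ^^ i) ((T ^^ k) x) \<in> f i\<close>
          by (simp add: g_def)
      qed
    qed
    ultimately show "\<exists>B\<in>join_cover T U ((+) k ` S). C \<subseteq> B" by blast
  qed
  also have "card W \<le> card V" unfolding W_def using V(2) by (rule card_image_le)
  finally show ?thesis using V(4) unfolding N_def by simp
qed

lemma a_shift: "finite S \<Longrightarrow> a ((+) k ` S) \<le> a S"
  unfolding a_def using N_shift[of S k] N_pos[of "(+) k ` S"]
  by (subst ln_le_cancel_iff) auto

lemma a_empty: "a {} = 0"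
proof -
  have "join_cover T U {} = {UNIV}" unfolding join_cover_def by auto
  hence "N {} \<le> 1" unfolding N_def using Ncov_coarsen[of "{UNIV}" "{UNIV}"] by auto
  thus ?thesis using N_pos[of "{}"] unfolding a_def by simp
qed

lemma a_card: "finite S \<Longrightarrow> a S \<le> real (card S) * a {0}"
proof (induction S rule: finite_induct)
  case empty then show ?case by (simp add: a_empty)
next
  case (insert j S)
  have "a (insert j S) = a ({j} \<union> S)" by simp
  also have "\<dots> \<le> a {j} + a S" using insert by (intro a_union) auto
  also have "a {j} \<le> a {0}" using a_shift[of "{0}" j] by simp
  finally show ?case using insert by (simp add: algebra_simps)
qed

end




lemma sum_prod_sep:
  "(\<Sum>p\<in>A \<times> B. (f (fst p) :: real) * g (snd p)) = (\<Sum>x\<in>A. f x) * (\<Sum>y\<in>B. g y)"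
  by (simp add: sum_product sum.cartesian_product split_def)

context cov begin

definition H :: "nat \<Rightarrow> real" where "H n = a {..<n}"
definition B :: "nat \<Rightarrow> real" where "B n = (\<Sum>S\<in>Pow {..<n}. (1/2)^n * a S)"

lemma H_nonneg: "H n \<ge> 0" unfolding H_def by (rule a_nonneg) simp

lemma H_sub: "H (m + n) \<le> H m + H n"
proof -
  have "{..<m+n} = {..<m} \<union> (+) m ` {..<n}"
  proof (intro equalityI subsetI)
    fix x assume "x \<in> {..<m+n}"
    thus "x \<in> {..<m} \<union> (+) m ` {..<n}"
      by (cases "x < m") (auto intro!: image_eqI[of _ _ "x - m"])
  qed auto
  hence "H (m + n) = a ({..<m} \<union> (+) m ` {..<n})" unfolding H_def by simp
  also have "\<dots> \<le> a {..<m} + a ((+) m ` {..<n})" by (rule a_union) auto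
  also have "a ((+) m ` {..<n}) \<le> a {..<n}" by (rule a_shift) simp
  finally show ?thesis unfolding H_def by simp
qed

lemma wsum: "(\<Sum>S\<in>Pow {..<n}. (1/2::real)^n) = 1"
  by (simp add: card_Pow power_one_over)

lemma B_nonneg: "B n \<ge> 0"
  unfolding B_def by (intro sum_nonneg mult_nonneg_nonneg a_nonneg) (auto intro: finite_subset)

lemma B_le_H: "B n \<le> H n"
proof -
  have "B n \<le> (\<Sum>S\<in>Pow {..<n}. (1/2)^n * H n)"
    unfolding B_def H_def by (intro sum_mono mult_left_mono a_mono) auto
  also have "\<dots> = H n" using wsum[of n] by (simp add: sum_distrib_right[symmetric])
  finally show ?thesis .
qed

lemma B_sub: "B (m + n) \<le> B m + B n"
proof -
  define \<phi> where "\<phi> p = fst p \<union> (+) m ` snd p" for p :: "nat set \<times> nat set"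
  define \<psi> where "\<psi> S = (S \<inter> {..<m}, (\<lambda>x. x - m) ` (S - {..<m}))" for S :: "nat set"
  have "B (m + n) = (\<Sum>p\<in>Pow {..<m} \<times> Pow {..<n}. (1/2)^(m+n) * a (\<phi> p))"
    unfolding B_def
  proof (rule sum.reindex_bij_witness[of _ \<psi> \<phi>, symmetric])
    fix p assume p: "p \<in> Pow {..<m} \<times> Pow {..<n}"
    then obtain S1 S2 where [simp]: "p = (S1, S2)" and S: "S1 \<subseteq> {..<m}" "S2 \<subseteq> {..<n}" by auto
    have "(S1 \<union> (+) m ` S2) \<inter> {..<m} = S1" using S by auto
    moreover have "(\<lambda>x. x - m) ` ((S1 \<union> (+) m ` S2) - {..<m}) = S2"
    proof -
      have "(S1 \<union> (+) m ` S2) - {..<m} = (+) m ` S2" using S by auto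
      thus ?thesis by (simp add: image_image)
    qed
    ultimately show "\<psi> (\<phi> p) = p" by (simp add: \<phi>_def \<psi>_def)
    show "\<phi> p \<in> Pow {..<m + n}" using S by (auto simp: \<phi>_def)
  next
    fix S assume S: "S \<in> Pow {..<m + n}"
    show "\<phi> (\<psi> S) = S"
    proof -
      have "(+) m ` (\<lambda>x. x - m) ` (S - {..<m}) = S - {..<m}"
        by (auto simp: image_image image_iff)
      thus ?thesis by (auto simp: \<phi>_def \<psi>_def)
    qed
    show "\<psi> S \<in> Pow {..<m} \<times> Pow {..<n}" using S by (auto simp: \<psi>_def)
  next
    fix p assume "p \<in> Pow {..<m} \<times> Pow {..<n}"
    show "(1/2)^(m+n) * a (\<phi> p) = (1/2)^(m+n) * a (\<phi> p)" ..
  qed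
  also have "\<dots> \<le> (\<Sum>p\<in>Pow {..<m} \<times> Pow {..<n}.
      ((1/2)^m * a (fst p)) * (1/2)^n + (1/2)^m * ((1/2)^n * a (snd p)))"
  proof (rule sum_mono)
    fix p assume p: "p \<in> Pow {..<m} \<times> Pow {..<n}"
    then obtain S1 S2 where [simp]: "p = (S1, S2)" and S: "S1 \<subseteq> {..<m}" "S2 \<subseteq> {..<n}" by auto
    have f: "finite S1" "finite S2" using S finite_subset by auto
    have "a (\<phi> p) \<le> a S1 + a ((+) m ` S2)" unfolding \<phi>_def using f by (simp add: a_union)
    also have "a ((+) m ` S2) \<le> a S2" using f(2) by (rule a_shift)
    finally have "a (\<phi> p) \<le> a S1 + a S2" by simp
    hence "(1/2::real)^(m+n) * a (\<phi> p) \<le> (1/2)^(m+n) * (a S1 + a S2)"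
      by (intro mult_left_mono) auto
    thus "(1/2::real)^(m+n) * a (\<phi> p) \<le> ((1/2)^m * a (fst p)) * (1/2)^n + (1/2)^m * ((1/2)^n * a (snd p))"
      by (simp add: power_add algebra_simps)
  qed
  also have "\<dots> = B m * (\<Sum>S2\<in>Pow {..<n}. (1/2)^n) + (\<Sum>S1\<in>Pow {..<m}. (1/2)^m) * B n"
    unfolding sum.distrib B_def
    using sum_prod_sep[of "\<lambda>S. (1/2)^m * a S" "\<lambda>S. (1/2)^n" "Pow {..<m}" "Pow {..<n}"]
      sum_prod_sep[of "\<lambda>S. (1/2)^m" "\<lambda>S. (1/2)^n * a S" "Pow {..<m}" "Pow {..<n}"]
    by simp
  also have "\<dots> = B m + B n" unfolding wsum by simp
  finally show ?thesis .
qed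

lemma H_conv: "(\<lambda>n. H n / real n) \<longlonglongrightarrow> htop_cover T U"
proof -
  have "convergent (\<lambda>n. H n / real n)" by (rule fekete[OF H_nonneg H_sub])
  moreover have "htop_cover T U = lim (\<lambda>n. H n / real n)"
    unfolding htop_cover_def H_def a_def N_def ..
  ultimately show ?thesis by (simp add: convergent_LIMSEQ_iff)
qed

lemma B_conv: "(\<lambda>n. B n / real n) \<longlonglongrightarrow> Asc T U"
proof -
  have "convergent (\<lambda>n. B n / real n)" by (rule fekete[OF B_nonneg B_sub])
  moreover have "Asc T U = lim (\<lambda>n. B n / real n)"
    unfolding Asc_def B_def a_def N_def by simp
  ultimately show ?thesis by (simp add: convergent_LIMSEQ_iff)
qed

lemma Asc_le_h: "Asc T U \<le> htop_cover T U"
  by (rule LIMSEQ_le[OF B_conv H_conv]) (auto intro!: divide_right_mono B_le_H)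

lemma B_compl: "(\<Sum>S\<in>Pow {..<n}. (1/2)^n * a ({..<n} - S)) = B n"
  unfolding B_def
  by (rule sum.reindex_bij_witness[of _ "\<lambda>S. {..<n} - S" "\<lambda>S. {..<n} - S"]) auto

lemma Intr_eq: "Intr T U = 2 * Asc T U - htop_cover T U"
proof -
  have eq: "(\<Sum>S\<in>Pow {..<n}. (1/2)^n *
        ln (real (Ncov (join_cover T U S)) * real (Ncov (join_cover T U ({..<n} - S)))
            / real (Ncov (join_cover T U {..<n})))) = 2 * B n - H n" for n
  proof -
    have "(\<Sum>S\<in>Pow {..<n}. (1/2)^n *
        ln (real (Ncov (join_cover T U S)) * real (Ncov (join_cover T U ({..<n} - S)))
            / real (Ncov (join_cover T U {..<n}))))
       = (\<Sum>S\<in>Pow {..<n}. (1/2)^n * a S + (1/2)^n * a ({..<n} - S) - (1/2)^n * H n)"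
    proof (rule sum.cong[OF refl])
      fix S assume "S \<in> Pow {..<n}"
      hence f: "finite S" by (auto intro: finite_subset)
      have p: "real (N S) > 0" "real (N ({..<n} - S)) > 0" "real (N {..<n}) > 0"
        using N_pos[of S] N_pos[of "{..<n} - S"] N_pos[of "{..<n}"] f by auto
      show "(1/2)^n * ln (real (Ncov (join_cover T U S)) * real (Ncov (join_cover T U ({..<n} - S)))
            / real (Ncov (join_cover T U {..<n})))
         = (1/2)^n * a S + (1/2)^n * a ({..<n} - S) - (1/2)^n * H n"
        using p unfolding a_def H_def N_def[symmetric]
        by (simp add: ln_div ln_mult algebra_simps)
    qed
    also have "\<dots> = B n + B n - H n"
      using wsum[of n] unfolding sum_subtractf sum.distrib B_compl
      by (simp add: B_def sum_distrib_right[symmetric])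
    finally show ?thesis by simp
  qed
  have "(\<lambda>n. (2 * B n - H n) / real n) \<longlonglongrightarrow> 2 * Asc T U - htop_cover T U"
  proof -
    have "(\<lambda>n. 2 * (B n / real n) - H n / real n) \<longlonglongrightarrow> 2 * Asc T U - htop_cover T U"
      by (intro tendsto_intros B_conv H_conv)
    thus ?thesis by (simp add: diff_divide_distrib)
  qed
  moreover have "Intr T U = lim (\<lambda>n. (2 * B n - H n) / real n)"
    unfolding Intr_def eq by simp
  ultimately show ?thesis by (simp add: limI)
qed

end



definition Pk :: "nat \<Rightarrow> nat set \<Rightarrow> nat set" where
  "Pk k S = (\<Union>i\<in>S. (+) i ` {..<k})"

lemma Pk_mem: "l \<in> Pk k S \<longleftrightarrow> (\<exists>i\<in>S. i \<le> l \<and> l < i + k)"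
proof
  assume "l \<in> Pk k S"
  then obtain i j where "i \<in> S" "j < k" "l = i + j" unfolding Pk_def by blast
  thus "\<exists>i\<in>S. i \<le> l \<and> l < i + k" by (intro bexI[of _ i]) auto
next
  assume "\<exists>i\<in>S. i \<le> l \<and> l < i + k"
  then obtain i where i: "i \<in> S" "i \<le> l" "l < i + k" by blast
  hence "l = i + (l - i)" "l - i < k" by auto
  thus "l \<in> Pk k S" unfolding Pk_def using i(1) by blast
qed

lemma Pk_finite: "finite S \<Longrightarrow> finite (Pk k S)"
  unfolding Pk_def by (intro finite_UN_I) auto

lemma count_one:
  assumes "k \<le> l" "l < n"
  shows "card (Pow {..<n} \<inter> {S. l \<notin> Pk k S}) = 2 ^ (n - k)"
proof -
  define J where "J = {Suc l - k..l}"
  have J: "J \<subseteq> {..<n}" "card J = k" unfolding J_def using assms by auto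
  have "(Pow {..<n} \<inter> {S. l \<notin> Pk k S}) = Pow ({..<n} - J)"
  proof -
    have Jm: "i \<in> J \<longleftrightarrow> i \<le> l \<and> l < i + k" for i unfolding J_def using assms by auto
    show ?thesis
    proof (intro equalityI subsetI)
      fix S assume "S \<in> Pow {..<n} \<inter> {S. l \<notin> Pk k S}"
      hence "S \<subseteq> {..<n}" "\<forall>i\<in>S. \<not> (i \<le> l \<and> l < i + k)" unfolding Pk_mem by blast+
      thus "S \<in> Pow ({..<n} - J)" using Jm by blast
    next
      fix S assume "S \<in> Pow ({..<n} - J)"
      hence "S \<subseteq> {..<n}" "\<forall>i\<in>S. \<not> (i \<le> l \<and> l < i + k)" using Jm by blast+
      thus "S \<in> Pow {..<n} \<inter> {S. l \<notin> Pk k S}" unfolding Pk_mem by blast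
    qed
  qed
  moreover have "card ({..<n} - J) = n - k"
  proof -
    have "finite J" unfolding J_def by simp
    from card_Diff_subset[OF this J(1)] show ?thesis using J(2) by simp
  qed
  ultimately show ?thesis by (simp add: card_Pow)
qed

lemma count_bound:
  "(\<Sum>S\<in>Pow {..<n}. (1/2)^n * real (card ({..<n} - Pk k S))) \<le> real k + real n * (1/2)^k"
proof -
  have "(\<Sum>S\<in>Pow {..<n}. (1/2)^n * real (card ({..<n} - Pk k S)))
      = (\<Sum>S\<in>Pow {..<n}. \<Sum>l<n. (1/2)^n * of_bool (l \<notin> Pk k S))"
  proof (rule sum.cong[OF refl])
    fix S
    have "real (card ({..<n} - Pk k S)) = (\<Sum>l<n. of_bool (l \<notin> Pk k S))"
    proof -
      have "{..<n} - Pk k S = {..<n} \<inter> {l. l \<notin> Pk k S}" by auto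
      thus ?thesis by simp
    qed
    thus "(1/2)^n * real (card ({..<n} - Pk k S)) = (\<Sum>l<n. (1/2)^n * of_bool (l \<notin> Pk k S))"
      by (simp add: sum_distrib_left)
  qed
  also have "\<dots> = (\<Sum>l<n. (1/2)^n * real (card (Pow {..<n} \<inter> {S. l \<notin> Pk k S})))"
    by (subst sum.swap) (simp only: sum_distrib_left[symmetric] sum_of_bool_eq finite_Pow_iff finite_lessThan)
  also have "\<dots> \<le> (\<Sum>l<n. of_bool (l < k) + (1/2)^k)"
  proof (rule sum_mono)
    fix l assume l: "l \<in> {..<n}"
    show "(1/2)^n * real (card (Pow {..<n} \<inter> {S. l \<notin> Pk k S})) \<le> of_bool (l < k) + (1/2::real)^k"
    proof (cases "l < k")
      case True
      have "card (Pow {..<n} \<inter> {S. l \<notin> Pk k S}) \<le> card (Pow {..<n})"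
        by (rule card_mono) auto
      hence "real (card (Pow {..<n} \<inter> {S. l \<notin> Pk k S})) \<le> 2 ^ n" by (simp add: card_Pow)
      hence "(1/2)^n * real (card (Pow {..<n} \<inter> {S. l \<notin> Pk k S})) \<le> (1/2)^n * 2^n"
        by (intro mult_left_mono) auto
      also have "\<dots> = (1/2 * 2)^n" by (rule power_mult_distrib[symmetric])
      also have "\<dots> = 1" by simp
      finally have "(1/2)^n * real (card (Pow {..<n} \<inter> {S. l \<notin> Pk k S})) \<le> 1" .
      moreover have "(0::real) \<le> (1/2)^k" by simp
      moreover have "of_bool (l < k) = (1::real)" using True by simp
      ultimately show ?thesis by linarith
    next
      case False
      hence "card (Pow {..<n} \<inter> {S. l \<notin> Pk k S}) = 2 ^ (n - k)" using l by (intro count_one) auto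
      moreover have "(1/2::real)^n * 2^(n-k) = (1/2)^k"
      proof -
        have "(1/2::real)^n = (1/2)^k * (1/2)^(n-k)"
          using power_add[of "1/2::real" k "n-k"] False l by simp
        moreover have "(1/2::real)^(n-k) * 2^(n-k) = 1"
          by (simp add: power_mult_distrib[symmetric])
        ultimately show ?thesis by (simp add: mult.assoc)
      qed
      ultimately show ?thesis by simp
    qed
  qed
  also have "\<dots> = real (card ({..<n} \<inter> {l. l < k})) + real n * (1/2)^k"
    by (simp add: sum.distrib)
  also have "card ({..<n} \<inter> {l. l < k}) \<le> k"
  proof -
    have "card ({..<n} \<inter> {l. l < k}) \<le> card {..<k}" by (rule card_mono) auto
    thus ?thesis by simp
  qed
  hence "real (card ({..<n} \<inter> {l. l < k})) + real n * (1/2)^k \<le> real k + real n * (1/2)^k" by simp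
  finally show ?thesis .
qed




lemma cont_funpow:
  fixes T :: "'a::topological_space \<Rightarrow> 'a"
  assumes "continuous_on UNIV T"
  shows "continuous_on UNIV (T ^^ i)"
proof (induction i)
  case 0
  have "(T ^^ 0) = (\<lambda>x. x)" by (rule ext) simp
  then show ?case by (simp add: continuous_on_id)
next
  case (Suc i)
  have "continuous_on ((T ^^ i) ` UNIV) T" using assms by (rule continuous_on_subset) simp
  hence "continuous_on UNIV (T \<circ> (T ^^ i))" using Suc by (intro continuous_on_compose)
  thus ?case by simp
qed


lemma V_cover:
  assumes C: "cov U" and cont: "continuous_on UNIV T"
  shows "cov (join_cover T U {..<k})"
proof
  interpret cov T U by (rule C)
  show "compact (UNIV :: 'a set)" by (rule cpt)
  show "open_cover (join_cover T U {..<k})"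
    unfolding open_cover_def
  proof
    show "\<forall>A\<in>join_cover T U {..<k}. open A"
    proof
      fix A assume "A \<in> join_cover T U {..<k}"
      then obtain f where f: "A = (\<Inter>i\<in>{..<k}. (T ^^ i) -` f i)" "\<forall>i\<in>{..<k}. f i \<in> U"
        unfolding join_cover_def by blast
      have "open ((T ^^ i) -` f i)" if "i \<in> {..<k}" for i
      proof -
        have "open (f i)" using f(2) that oc unfolding open_cover_def by blast
        hence "open ((T ^^ i) -` f i \<inter> UNIV)"
          using cont_funpow[OF cont, of i] continuous_on_open_vimage[of UNIV "T ^^ i"] by blast
        thus ?thesis by simp
      qed
      thus "open A" unfolding f(1) by (intro open_INT) auto
    qed
    obtain W where W: "W \<subseteq> join_cover T U {..<k}" "\<Union>W = UNIV" using fin_sub[of "{..<k}"] by blast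
    have "UNIV \<subseteq> \<Union>(join_cover T U {..<k})" using W by blast
    thus "\<Union>(join_cover T U {..<k}) = UNIV" by blast
  qed
qed

lemma R2:
  assumes C: "cov U" and V: "cov (join_cover T U {..<k})" and fS: "finite S"
  shows "cov.N T (join_cover T U {..<k}) S \<le> cov.N T U (Pk k S)"
proof -
  interpret cov T U by (rule C)
  have ex: "\<exists>W\<subseteq>join_cover T U (Pk k S). finite W \<and> \<Union>W = UNIV \<and> card W = N (Pk k S)"
    by (rule N_attained[OF Pk_finite[OF fS]])
  then obtain W where W: "W\<subseteq>join_cover T U (Pk k S)" "finite W" "\<Union>W = UNIV" "card W = N (Pk k S)"
    by auto
  have "Ncov (join_cover T (join_cover T U {..<k}) S) \<le> card W"
  proof (rule Ncov_coarsen[OF W(2,3)])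
    fix A assume "A \<in> W"
    then obtain f where f: "A = (\<Inter>l\<in>Pk k S. (T ^^ l) -` f l)" "\<forall>l\<in>Pk k S. f l \<in> U"
      using W(1) unfolding join_cover_def by blast
    define g where "g i = (\<Inter>j\<in>{..<k}. (T ^^ j) -` f (i + j))" for i
    have g: "g i \<in> join_cover T U {..<k}" if "i \<in> S" for i
    proof -
      have "\<forall>j\<in>{..<k}. f (i + j) \<in> U"
      proof
        fix j assume "j \<in> {..<k}"
        hence "i + j \<in> Pk k S" unfolding Pk_mem using that by (intro bexI[of _ i]) auto
        thus "f (i + j) \<in> U" using f(2) by blast
      qed
      thus ?thesis unfolding join_cover_def g_def
        by (intro CollectI exI[of _ "\<lambda>j. f (i + j)"]) simp
    qed
    have "(\<Inter>i\<in>S. (T ^^ i) -` g i) \<in> join_cover T (join_cover T U {..<k}) S"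
      unfolding join_cover_def[of T "join_cover T U {..<k}"] using g
      by (intro CollectI exI[of _ g]) simp
    moreover have "A \<subseteq> (\<Inter>i\<in>S. (T ^^ i) -` g i)"
    proof
      fix x assume x: "x \<in> A"
      have "(T ^^ i) x \<in> g i" if i: "i \<in> S" for i
      proof -
        have "(T ^^ j) ((T ^^ i) x) \<in> f (i + j)" if j: "j < k" for j
        proof -
          have "i + j \<in> Pk k S" unfolding Pk_mem using i j by (intro bexI[of _ i]) auto
          hence "(T ^^ (i + j)) x \<in> f (i + j)" using x f(1) by blast
          moreover have "(T ^^ (i + j)) x = (T ^^ j) ((T ^^ i) x)"
            by (simp add: funpow_add add.commute[of i])
          ultimately show ?thesis by simp
        qed
        thus ?thesis unfolding g_def by simp
      qed
      thus "x \<in> (\<Inter>i\<in>S. (T ^^ i) -` g i)" by simp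
    qed
    ultimately show "\<exists>B\<in>join_cover T (join_cover T U {..<k}) S. A \<subseteq> B" by blast
  qed
  thus ?thesis using W(4) unfolding cov.N_def[OF V] by simp
qed

lemma R1:
  assumes C: "cov U" and V: "cov (join_cover T U {..<k})" and fS: "finite S"
  shows "cov.N T U (Pk k S) \<le> cov.N T (join_cover T U {..<k}) S"
proof -
  interpret cov T U by (rule C)
  have ex: "\<exists>W\<subseteq>join_cover T (join_cover T U {..<k}) S. finite W \<and> \<Union>W = UNIV \<and>
      card W = cov.N T (join_cover T U {..<k}) S"
    by (rule cov.N_attained[OF V fS])
  then obtain W where W: "W\<subseteq>join_cover T (join_cover T U {..<k}) S" "finite W" "\<Union>W = UNIV"
      "card W = cov.N T (join_cover T U {..<k}) S"
    by auto
  have "Ncov (join_cover T U (Pk k S)) \<le> card W"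
  proof (rule Ncov_coarsen[OF W(2,3)])
    fix A assume "A \<in> W"
    then obtain g where g: "A = (\<Inter>i\<in>S. (T ^^ i) -` g i)" "\<forall>i\<in>S. g i \<in> join_cover T U {..<k}"
      using W(1) unfolding join_cover_def[of T "join_cover T U {..<k}"] by blast
    have ex: "\<forall>i\<in>S. \<exists>F. g i = (\<Inter>j\<in>{..<k}. (T ^^ j) -` F j) \<and> (\<forall>j\<in>{..<k}. F j \<in> U)"
    proof
      fix i assume "i \<in> S"
      hence "g i \<in> join_cover T U {..<k}" using g(2) by blast
      thus "\<exists>F. g i = (\<Inter>j\<in>{..<k}. (T ^^ j) -` F j) \<and> (\<forall>j\<in>{..<k}. F j \<in> U)"
        unfolding join_cover_def by (rule CollectD)
    qed
    from bchoice[OF ex] obtain F where F0: "\<forall>i\<in>S. g i = (\<Inter>j\<in>{..<k}. (T ^^ j) -` F i j) \<and> (\<forall>j\<in>{..<k}. F i j \<in> U)"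
      by blast
    have F: "g i = (\<Inter>j\<in>{..<k}. (T ^^ j) -` F i j) \<and> (\<forall>j\<in>{..<k}. F i j \<in> U)" if "i \<in> S" for i
      using F0 that by blast
    define \<sigma> where "\<sigma> l = (SOME i. i \<in> S \<and> i \<le> l \<and> l < i + k)" for l
    have \<sigma>: "\<sigma> l \<in> S \<and> \<sigma> l \<le> l \<and> l < \<sigma> l + k" if "l \<in> Pk k S" for l
    proof -
      have "\<exists>i. i \<in> S \<and> i \<le> l \<and> l < i + k" using that unfolding Pk_mem by blast
      from someI_ex[OF this] show ?thesis unfolding \<sigma>_def .
    qed
    define f where "f l = F (\<sigma> l) (l - \<sigma> l)" for l
    have "(\<Inter>l\<in>Pk k S. (T ^^ l) -` f l) \<in> join_cover T U (Pk k S)"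
    proof -
      have "\<forall>l\<in>Pk k S. f l \<in> U"
      proof
        fix l assume l: "l \<in> Pk k S"
        have "l - \<sigma> l \<in> {..<k}" using \<sigma>[OF l] by auto
        thus "f l \<in> U" unfolding f_def using F[of "\<sigma> l"] \<sigma>[OF l] by blast
      qed
      thus ?thesis unfolding join_cover_def by (intro CollectI exI[of _ f]) simp
    qed
    moreover have "A \<subseteq> (\<Inter>l\<in>Pk k S. (T ^^ l) -` f l)"
    proof
      fix x assume x: "x \<in> A"
      show "x \<in> (\<Inter>l\<in>Pk k S. (T ^^ l) -` f l)"
      proof (rule InterI, clarify)
        fix l assume l: "l \<in> Pk k S"
        define i where "i = \<sigma> l"
        have i: "i \<in> S" "i \<le> l" "l - i \<in> {..<k}" using \<sigma>[OF l] unfolding i_def by auto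
        have "(T ^^ i) x \<in> g i" using x g(1) i(1) by blast
        hence "(T ^^ (l - i)) ((T ^^ i) x) \<in> F i (l - i)" using F[OF i(1)] i(3) by blast
        moreover have "(T ^^ l) x = (T ^^ (l - i)) ((T ^^ i) x)"
        proof -
          have "l = (l - i) + i" using i(2) by simp
          hence "(T ^^ l) = (T ^^ (l - i)) \<circ> (T ^^ i)" by (metis funpow_add)
          thus ?thesis by simp
        qed
        ultimately show "x \<in> (T ^^ l) -` f l" unfolding f_def i_def by simp
      qed
    qed
    ultimately show "\<exists>B\<in>join_cover T U (Pk k S). A \<subseteq> B" by blast
  qed
  thus ?thesis using W(4) unfolding N_def by simp
qed




lemma a_mono_N:
  assumes "cov U" "cov W" "finite S" "finite S'" "cov.N T U S \<le> cov.N T W S'"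
  shows "cov.a T U S \<le> cov.a T W S'"
proof -
  have "1 \<le> cov.N T U S" by (rule cov.N_pos[OF assms(1,3)])
  thus ?thesis unfolding cov.a_def[OF assms(1)] cov.a_def[OF assms(2)] using assms(5)
    by (subst ln_le_cancel_iff) auto
qed

lemma Asc_lower:
  assumes C: "cov U" and cont: "continuous_on UNIV T"
  shows "htop_cover T U - cov.a T U {0} * (1/2)^k \<le> Asc T (join_cover T U {..<k})"
proof -
  define V where "V = join_cover T U {..<k}"
  have CV: "cov V" unfolding V_def by (rule V_cover[OF C cont])
  interpret U: cov T U by (rule C)
  interpret V: cov T V by (rule CV)
  define c where "c = U.a {0}"
  have key: "U.H n \<le> V.a S + c * real (card ({..<n} - Pk k S))" if S: "S \<in> Pow {..<n}" for n S
  proof -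
    have fS: "finite S" using S by (auto intro: finite_subset)
    define D where "D = {..<n} - Pk k S"
    have fD: "finite D" unfolding D_def by simp
    have fP: "finite (Pk k S)" by (rule Pk_finite[OF fS])
    have "U.H n \<le> U.a (Pk k S \<union> D)"
      unfolding U.H_def by (rule U.a_mono) (use fD fP in \<open>auto simp: D_def\<close>)
    also have "\<dots> \<le> U.a (Pk k S) + U.a D" by (rule U.a_union[OF fP fD])
    also have "U.a D \<le> real (card D) * c" unfolding c_def by (rule U.a_card[OF fD])
    also have "U.a (Pk k S) \<le> V.a S"
      by (rule a_mono_N[OF C CV fP fS]) (use R1[OF C CV[unfolded V_def] fS] in \<open>simp add: V_def\<close>)
    finally show ?thesis unfolding D_def by (simp add: mult.commute)
  qed
  have c0: "c \<ge> 0" unfolding c_def by (rule U.a_nonneg) simp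
  have Bge: "U.H n - c * (real k + real n * (1/2)^k) \<le> V.B n" for n
  proof -
    have "(\<Sum>S\<in>Pow {..<n}. (1/2)^n * (U.H n - c * real (card ({..<n} - Pk k S)))) \<le> V.B n"
      unfolding V.B_def
    proof (rule sum_mono)
      fix S assume S: "S \<in> Pow {..<n}"
      have "U.H n - c * real (card ({..<n} - Pk k S)) \<le> V.a S" using key[OF S] by linarith
      thus "(1/2)^n * (U.H n - c * real (card ({..<n} - Pk k S))) \<le> (1/2)^n * V.a S"
        by (rule mult_left_mono) simp
    qed
    moreover have "(\<Sum>S\<in>Pow {..<n}. (1/2)^n * (U.H n - c * real (card ({..<n} - Pk k S))))
        = U.H n * (\<Sum>S\<in>Pow {..<n}. (1/2)^n) - c * (\<Sum>S\<in>Pow {..<n}. (1/2)^n * real (card ({..<n} - Pk k S)))"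
      by (simp add: algebra_simps sum_subtractf sum_distrib_left sum_distrib_right)
    moreover have "c * (\<Sum>S\<in>Pow {..<n}. (1/2)^n * real (card ({..<n} - Pk k S))) \<le> c * (real k + real n * (1/2)^k)"
      by (rule mult_left_mono[OF count_bound c0])
    ultimately show ?thesis unfolding U.wsum by linarith
  qed
  have lim1: "(\<lambda>n. U.H n / real n - c * (1/2)^k - c * real k / real n) \<longlonglongrightarrow> htop_cover T U - c * (1/2)^k - 0"
    by (intro tendsto_intros U.H_conv)
  have "htop_cover T U - c * (1/2)^k - 0 \<le> Asc T V"
  proof (rule LIMSEQ_le[OF lim1 V.B_conv])
    show "\<exists>N. \<forall>n\<ge>N. U.H n / real n - c * (1/2)^k - c * real k / real n \<le> V.B n / real n"
    proof (intro exI[of _ 1] allI impI)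
      fix n :: nat assume n: "n \<ge> 1"
      hence np: "real n > 0" by simp
      have "U.H n / real n - c * (1/2)^k - c * real k / real n = (U.H n - c * (real k + real n * (1/2)^k)) / real n"
        using np by (simp add: field_simps)
      also have "\<dots> \<le> V.B n / real n" using Bge[of n] np by (intro divide_right_mono) auto
      finally show "U.H n / real n - c * (1/2)^k - c * real k / real n \<le> V.B n / real n" .
    qed
  qed
  thus ?thesis unfolding c_def V_def by simp
qed

lemma hV_le:
  assumes C: "cov U" and cont: "continuous_on UNIV T"
  shows "htop_cover T (join_cover T U {..<k}) \<le> htop_cover T U"
proof -
  define V where "V = join_cover T U {..<k}"
  have CV: "cov V" unfolding V_def by (rule V_cover[OF C cont])
  interpret U: cov T U by (rule C)
  interpret V: cov T V by (rule CV)
  have Hle: "V.H n \<le> U.H n + U.H k" for n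
  proof -
    have fP: "finite (Pk k {..<n})" by (rule Pk_finite) simp
    have "V.H n \<le> U.a (Pk k {..<n})" unfolding V.H_def
      by (rule a_mono_N[OF CV C _ fP]) (use R2[OF C CV[unfolded V_def], of "{..<n}"] in \<open>simp_all add: V_def\<close>)
    also have "\<dots> \<le> U.a {..<n+k}" by (rule U.a_mono) (auto simp: Pk_mem)
    also have "\<dots> = U.H (n + k)" unfolding U.H_def ..
    also have "\<dots> \<le> U.H n + U.H k" by (rule U.H_sub)
    finally show ?thesis .
  qed
  have lim1: "(\<lambda>n. U.H n / real n + U.H k / real n) \<longlonglongrightarrow> htop_cover T U + 0"
    by (intro tendsto_intros U.H_conv)
  show ?thesis unfolding V_def[symmetric]
  proof (rule LIMSEQ_le[OF V.H_conv lim1, simplified])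
    show "\<exists>N. \<forall>n\<ge>N. V.H n / real n \<le> U.H n / real n + U.H k / real n"
      using Hle by (intro exI[of _ 0] allI impI) (simp add: add_divide_distrib[symmetric] divide_right_mono)
  qed
qed




lemma ereal_approx:
  fixes h c :: real and f :: "'b \<Rightarrow> real"
  assumes c: "c \<ge> 0" and ex: "\<And>k::nat. \<exists>W\<in>A. h - 2 * c * (1/2)^k \<le> f W"
  shows "ereal h \<le> (SUP W\<in>A. ereal (f W))"
proof (rule ereal_le_epsilon2)
  fix e :: real assume e: "e > 0"
  have "e / (2 * c + 1) > 0" using e c by simp
  then obtain k :: nat where k: "(1/2)^k < e / (2 * c + 1)"
    using real_arch_pow_inv[of "e / (2 * c + 1)" "1/2"] by auto
  have "(2 * c + 1) * (1/2::real)^k < e" using k c by (simp add: field_simps)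
  moreover have "2 * c * (1/2::real)^k \<le> (2 * c + 1) * (1/2)^k" by (simp add: algebra_simps)
  ultimately have ck: "2 * c * (1/2::real)^k \<le> e" by linarith
  obtain W where W: "W \<in> A" "h - 2 * c * (1/2)^k \<le> f W" using ex[of k] by blast
  have "h \<le> f W + e" using W(2) ck by linarith
  hence "ereal h \<le> ereal (f W) + ereal e" by simp
  also have "\<dots> \<le> (SUP W\<in>A. ereal (f W)) + ereal e"
    by (intro add_right_mono SUP_upper W(1))
  finally show "ereal h \<le> (SUP W\<in>A. ereal (f W)) + ereal e" .
qed

theorem theorem3p1:
  fixes T :: "'a::t2_space \<Rightarrow> 'a"
  assumes "compact (UNIV :: 'a set)"
    and "continuous_on UNIV T"
  shows "(SUP U\<in>{U. open_cover U}. ereal (Asc T U)) = htop T \<and>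
         (SUP U\<in>{U. open_cover U}. ereal (Intr T U)) = htop T"
proof -
  have cov_of: "cov W" if "open_cover W" for W :: "'a set set"
    using assms(1) that by (simp add: cov_def)
  have up: "Asc T W \<le> htop_cover T W \<and> Intr T W \<le> htop_cover T W" if "open_cover W" for W
  proof -
    have "Asc T W \<le> htop_cover T W" by (rule cov.Asc_le_h[OF cov_of[OF that]])
    moreover have "Intr T W = 2 * Asc T W - htop_cover T W" by (rule cov.Intr_eq[OF cov_of[OF that]])
    ultimately show ?thesis by linarith
  qed
  have low: "\<exists>W\<in>{U. open_cover U}. htop_cover T U - 2 * cov.a T U {0} * (1/2)^k \<le> Asc T W"
    "\<exists>W\<in>{U. open_cover U}. htop_cover T U - 2 * cov.a T U {0} * (1/2)^k \<le> Intr T W"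
    if U: "open_cover U" for U :: "'a set set" and k :: nat
  proof -
    define V where "V = join_cover T U {..<k}"
    have CU: "cov U" by (rule cov_of[OF U])
    have CV: "cov V" unfolding V_def by (rule V_cover[OF CU assms(2)])
    have oV: "open_cover V" by (rule cov.oc[OF CV])
    have c0: "cov.a T U {0} \<ge> 0" by (rule cov.a_nonneg[OF CU]) simp
    have A: "htop_cover T U - cov.a T U {0} * (1/2)^k \<le> Asc T V"
      unfolding V_def by (rule Asc_lower[OF CU assms(2)])
    have h: "htop_cover T V \<le> htop_cover T U" unfolding V_def by (rule hV_le[OF CU assms(2)])
    have I: "Intr T V = 2 * Asc T V - htop_cover T V" by (rule cov.Intr_eq[OF CV])
    have p: "0 \<le> cov.a T U {0} * (1/2::real)^k" using c0 by simp
    show "\<exists>W\<in>{U. open_cover U}. htop_cover T U - 2 * cov.a T U {0} * (1/2)^k \<le> Asc T W"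
      using oV A p by (intro bexI[of _ V]) auto
    show "\<exists>W\<in>{U. open_cover U}. htop_cover T U - 2 * cov.a T U {0} * (1/2)^k \<le> Intr T W"
      using oV A h I p by (intro bexI[of _ V]) auto
  qed
  have c0: "cov.a T U {0} \<ge> 0" if "open_cover U" for U :: "'a set set"
    by (rule cov.a_nonneg[OF cov_of[OF that]]) simp
  show ?thesis
  proof (intro conjI antisym)
    show "(SUP U\<in>{U. open_cover U}. ereal (Asc T U)) \<le> htop T"
      unfolding htop_def by (rule SUP_mono) (use up in auto)
    show "(SUP U\<in>{U. open_cover U}. ereal (Intr T U)) \<le> htop T"
      unfolding htop_def by (rule SUP_mono) (use up in auto)
    show "htop T \<le> (SUP U\<in>{U. open_cover U}. ereal (Asc T U))"
      unfolding htop_def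
    proof (rule SUP_least)
      fix U :: "'a set set" assume "U \<in> {U. open_cover U}"
      hence U: "open_cover U" by simp
      show "ereal (htop_cover T U) \<le> (SUP U\<in>{U. open_cover U}. ereal (Asc T U))"
        by (rule ereal_approx[OF c0[OF U] low(1)[OF U]])
    qed
    show "htop T \<le> (SUP U\<in>{U. open_cover U}. ereal (Intr T U))"
      unfolding htop_def
    proof (rule SUP_least)
      fix U :: "'a set set" assume "U \<in> {U. open_cover U}"
      hence U: "open_cover U" by simp
      show "ereal (htop_cover T U) \<le> (SUP U\<in>{U. open_cover U}. ereal (Intr T U))"
        by (rule ereal_approx[OF c0[OF U] low(2)[OF U]])
    qed
  qed
qed



end
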